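(* Let $n\ge1$, $\alpha\in\{1,2,\dots,n\}$, and for integers $l_1>\dots>l_n\ge0$ let $$c_{\mathbf l}(\lambda)=(-1)^{n(n-1)/2}\prod_{k=1}^n\Gamma(2\lambda+2k-1)\cdot\frac{(-1)^{\sum_j l_j}\prod_{1\le a<b\le n}(l_a^2-l_b^2)}{\prod_{j=1}^n\Gamma(-l_j+\lambda+n)\,\Gamma(l_j+\lambda+n)},$$ a meromorphic function of $\lambda$. Then each $c_{\mathbf l}$ is holomorphic at $\lambda=-n+\alpha$; moreover $c_{\mathbf l}(-n+\alpha)\neq0$ if and only if $(l_{n-\alpha+1},\dots,l_{n-1},l_n)=(\alpha-1,\dots,1,0)$, and all nonzero values $c_{\mathbf l}(-n+\alpha)$ have the same sign. Consequently, at $\lambda=-n+\alpha$ the invariant Hermitian form on $C^\infty({\rm SO}(2n))$ with these Fourier coefficients is semidefinite.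
   Context: Here $c_{\mathbf l}(\lambda)$ is, for $\operatorname{Re}\lambda>-1/2$, the Fourier coefficient of $\ell_\lambda(g)=\prod_j|\sin(\varphi_j/2)|^{2\lambda}$ on ${\rm SO}(2n)$ (eigenvalues $e^{\pm i\varphi_j}$) against an irreducible character of highest weight $\mu$, with $l_j=\mu_j+n-j$ ($j<n$), $l_n=|\mu_n|$; $1/\Gamma$ is entire. *)

theory Defs
  imports "HOL-Analysis.Analysis"
begin

text \<open>Admissible index tuples: integers l_1 > ... > l_n >= 0, encoded as l :: nat => nat
  on the indices 1..n (values outside 1..n are irrelevant).\<close>
definition admissible :: "nat \<Rightarrow> (nat \<Rightarrow> nat) \<Rightarrow> bool" where
  "admissible n l \<longleftrightarrow> (\<forall>a b. 1 \<le> a \<longrightarrow> a < b \<longrightarrow> b \<le> n \<longrightarrow> l b < l a)"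

text \<open>The meromorphic function c_l(lambda), written literally with the Gamma function.
  (Isabelle's Gamma is 0 at its poles; only values off the poles are ever used below.)\<close>
definition coeff_c :: "nat \<Rightarrow> (nat \<Rightarrow> nat) \<Rightarrow> complex \<Rightarrow> complex" where
  "coeff_c n l w =
     (-1) ^ (n * (n - 1) div 2) * (\<Prod>k=1..n. Gamma (2 * w + 2 * of_nat k - 1)) *
     ((-1) ^ (\<Sum>j=1..n. l j) *
      (\<Prod>(a, b)\<in>{(a, b). 1 \<le> a \<and> a < b \<and> b \<le> n}.
          of_int (int (l a) ^ 2 - int (l b) ^ 2))
      / (\<Prod>j=1..n. Gamma (- of_nat (l j) + w + of_nat n) * Gamma (of_nat (l j) + w + of_nat n)))"

definition holomorphic_at_removable :: "(complex \<Rightarrow> complex) \<Rightarrow> complex \<Rightarrow> bool" where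
  "holomorphic_at_removable f z0 \<longleftrightarrow>
     (\<exists>r>0. \<exists>g. g holomorphic_on ball z0 r \<and> (\<forall>z\<in>ball z0 r - {z0}. g z = f z))"

definition value_at :: "(complex \<Rightarrow> complex) \<Rightarrow> complex \<Rightarrow> complex" where
  "value_at f z0 = Lim (at z0) f"

end

theory Submission
  imports Defs
begin


definition FA :: "(complex \<Rightarrow> complex) \<Rightarrow> complex \<Rightarrow> int \<Rightarrow> nat \<Rightarrow> bool" where
 "FA f z0 d e \<longleftrightarrow> (\<exists>r>0. \<exists>h. \<exists>p::real. p > 0 \<and> h holomorphic_on ball z0 r \<and>
     h z0 = complex_of_real ((-1)^e * p) \<and> (\<forall>w\<in>ball z0 r - {z0}. f w = (w - z0) powi d * h w))"

lemma FA_mult: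
  assumes "FA f z0 d1 e1" "FA g z0 d2 e2"
  shows "FA (\<lambda>w. f w * g w) z0 (d1 + d2) (e1 + e2)"
proof -
  obtain r1 h1 p1 where 1: "r1 > 0" "p1 > 0" "h1 holomorphic_on ball z0 r1"
    "h1 z0 = complex_of_real ((-1)^e1 * p1)" "\<forall>w\<in>ball z0 r1 - {z0}. f w = (w - z0) powi d1 * h1 w"
    using assms(1) unfolding FA_def by blast
  obtain r2 h2 p2 where 2: "r2 > 0" "p2 > 0" "h2 holomorphic_on ball z0 r2"
    "h2 z0 = complex_of_real ((-1)^e2 * p2)" "\<forall>w\<in>ball z0 r2 - {z0}. g w = (w - z0) powi d2 * h2 w"
    using assms(2) unfolding FA_def by blast
  define r where "r = min r1 r2"
  have r: "r > 0" using 1 2 by (simp add: r_def)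
  have "(\<lambda>w. h1 w * h2 w) holomorphic_on ball z0 r"
    by (intro holomorphic_on_mult holomorphic_on_subset[OF 1(3)] holomorphic_on_subset[OF 2(3)])
       (auto simp: r_def)
  moreover have "h1 z0 * h2 z0 = complex_of_real ((-1)^(e1+e2) * (p1 * p2))"
    using 1(4) 2(4) by (simp add: power_add)
  moreover have "\<forall>w\<in>ball z0 r - {z0}. f w * g w = (w - z0) powi (d1 + d2) * (h1 w * h2 w)"
  proof
    fix w assume w: "w \<in> ball z0 r - {z0}"
    then have "w \<in> ball z0 r1 - {z0}" "w \<in> ball z0 r2 - {z0}" "w - z0 \<noteq> 0" by (auto simp: r_def)
    then show "f w * g w = (w - z0) powi (d1 + d2) * (h1 w * h2 w)"
      using 1(5) 2(5) by (simp add: power_int_add)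
  qed
  moreover have "p1 * p2 > 0" using 1 2 by simp
  ultimately show ?thesis unfolding FA_def using r by blast
qed

lemma FA_one: "FA (\<lambda>w. 1) z0 0 0"
  unfolding FA_def by (rule exI[of _ 1], simp, rule exI[of _ "\<lambda>_. 1"], rule exI[of _ 1], auto)

lemma FA_prod:
  assumes "finite A" "\<And>i. i \<in> A \<Longrightarrow> FA (f i) z0 (d i) (e i)"
  shows "FA (\<lambda>w. \<Prod>i\<in>A. f i w) z0 (\<Sum>i\<in>A. d i) (\<Sum>i\<in>A. e i)"
  using assms
proof (induction A rule: finite_induct)
  case empty
  then show ?case using FA_one by simp
next
  case (insert x F)
  have "FA (\<lambda>w. f x w * (\<Prod>i\<in>F. f i w)) z0 (d x + (\<Sum>i\<in>F. d i)) (e x + (\<Sum>i\<in>F. e i))"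
    using insert by (intro FA_mult) auto
  then show ?case using insert by simp
qed

lemma FA_holo:
  assumes "r > 0" "f holomorphic_on ball z0 r" "f z0 = complex_of_real ((-1)^e * p)" "p > 0"
  shows "FA f z0 0 e"
  unfolding FA_def using assms by (intro exI[of _ r] conjI exI[of _ f] exI[of _ p]) auto

lemma FA_final:
  assumes "FA f z0 d e" "d \<ge> 0"
  shows "(\<exists>r>0. \<exists>g. g holomorphic_on ball z0 r \<and> (\<forall>z\<in>ball z0 r - {z0}. g z = f z))
    \<and> (d = 0 \<longrightarrow> (\<exists>p>0. Lim (at z0) f = complex_of_real ((-1)^e * p)))
    \<and> (d > 0 \<longrightarrow> Lim (at z0) f = 0)"
proof -
  obtain r h p where 1: "r > 0" "p > 0" "h holomorphic_on ball z0 r"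
    "h z0 = complex_of_real ((-1)^e * p)" "\<forall>w\<in>ball z0 r - {z0}. f w = (w - z0) powi d * h w"
    using assms(1) unfolding FA_def by blast
  define g where "g w = (w - z0) ^ nat d * h w" for w
  have gh: "g holomorphic_on ball z0 r" unfolding g_def
    by (intro holomorphic_intros 1(3))
  have eq: "\<forall>z\<in>ball z0 r - {z0}. g z = f z"
    using 1(5) assms(2) by (auto simp: g_def power_int_def)
  have "isCont g z0"
    using gh 1(1) using continuous_on_eq_continuous_at[of "ball z0 r" g] holomorphic_on_imp_continuous_on by auto
  then have "(g \<longlongrightarrow> g z0) (at z0)" by (simp add: isCont_def)
  then have "(f \<longlongrightarrow> g z0) (at z0)"
    by (rule Lim_transform_within_open[where s="ball z0 r"]) (use eq 1(1) in auto)
  then have L: "Lim (at z0) f = g z0" by (intro tendsto_Lim) auto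
  show ?thesis
  proof (intro conjI impI)
    show "\<exists>r>0. \<exists>g. g holomorphic_on ball z0 r \<and> (\<forall>z\<in>ball z0 r - {z0}. g z = f z)"
      using gh eq 1(1) by blast
    assume "d = 0" then show "\<exists>p>0. Lim (at z0) f = complex_of_real ((-1)^e * p)"
      using L 1 by (auto simp: g_def)
  next
    assume "d > 0" then show "Lim (at z0) f = 0" using L by (simp add: g_def)
  qed
qed



lemma nonpos_Re: "(x::complex) \<in> \<int>\<^sub>\<le>\<^sub>0 \<Longrightarrow> Re x \<le> 0"
  by (auto elim!: nonpos_Ints_cases)

lemma FA_pole:
  assumes "odd m"
  shows "FA (\<lambda>w. Gamma (2 * (w - z0) - of_nat m)) z0 (-1) 1"
proof -
  define h where "h w = Gamma (2 * (w - z0) + 1) / (2 * pochhammer (2 * (w - z0) - of_nat m) m)" for w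
  have Re_small: "\<bar>Re (w - z0)\<bar> < 1/4" if "w \<in> ball z0 (1/4)" for w
    using that abs_Re_le_cmod[of "w - z0"] by (auto simp: dist_norm norm_minus_commute)
  have poch_nz: "pochhammer (2 * (w - z0) - of_nat m) m \<noteq> 0" if "w \<in> ball z0 (1/4)" for w
  proof
    assume "pochhammer (2 * (w - z0) - of_nat m) m = 0"
    then obtain k where k: "k < m" "2 * (w - z0) - of_nat m = - of_nat k"
      by (auto simp: pochhammer_eq_0_iff)
    then have "2 * (w - z0) = of_nat m - of_nat k" by (simp add: algebra_simps)
    then have "Re (2 * (w - z0)) = real m - real k" by simp
    then show False using Re_small[OF that] k(1) by auto
  qed
  have hol: "h holomorphic_on ball z0 (1/4)"
    unfolding h_def pochhammer_prod
  proof (intro holomorphic_intros holomorphic_on_prod)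
    fix w assume "w \<in> ball z0 (1/4)"
    then show "2 * (w - z0) + 1 \<notin> \<int>\<^sub>\<le>\<^sub>0" using Re_small[of w] nonpos_Re by force
  next
    fix w assume "w \<in> ball z0 (1/4)"
    then show "2 * (\<Prod>i = 0..<m. 2 * (w - z0) - of_nat m + of_nat i) \<noteq> 0"
      using poch_nz[of w] by (simp add: pochhammer_prod)
  qed
  have pm: "pochhammer (- of_nat m :: complex) m = of_real ((-1)^m * fact m)"
    by (simp add: pochhammer_minus flip: pochhammer_fact)
  have hz: "h z0 = complex_of_real ((-1)^1 * (1 / (2 * fact m)))"
    using assms by (simp add: h_def pm)
  have eq: "Gamma (2 * (w - z0) - of_nat m) = (w - z0) powi (-1) * h w"
    if w: "w \<in> ball z0 (1/4) - {z0}" for w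
  proof -
    define x where "x = 2 * (w - z0) - of_nat m"
    have t: "w - z0 \<noteq> 0" using w by auto
    have x: "x \<notin> \<int>\<^sub>\<le>\<^sub>0"
    proof
      assume "x \<in> \<int>\<^sub>\<le>\<^sub>0"
      then obtain k where k: "x = of_int k" by (auto elim!: nonpos_Ints_cases)
      then have e: "2 * (w - z0) = of_int (k + int m)" by (simp add: x_def algebra_simps)
      have "norm (2 * (w - z0)) = 2 * norm (w - z0)" by (simp only: norm_mult) simp
      then have "norm (2 * (w - z0)) < 1/2" using w by (auto simp: dist_norm norm_minus_commute)
      then have "\<bar>real_of_int (k + int m)\<bar> < 1/2" by (simp only: e norm_of_int)
      then have "k + int m = 0" by linarith
      then show False using e t by simp
    qed
    have xe: "x + of_nat (Suc m) = 2 * (w - z0) + 1" by (simp add: x_def)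
    have A: "pochhammer x (Suc m) = Gamma (2 * (w - z0) + 1) / Gamma x"
      using pochhammer_Gamma[OF x, of "Suc m"] unfolding xe .
    have B: "pochhammer x (Suc m) = pochhammer x m * (2 * (w - z0))"
      by (simp add: pochhammer_Suc x_def)
    have C: "Gamma x \<noteq> 0" using x by (simp add: Gamma_eq_zero_iff)
    have D: "pochhammer x m \<noteq> 0" using poch_nz[of w] w by (simp add: x_def)
    from A B have "Gamma (2 * (w - z0) + 1) = Gamma x * (pochhammer x m * (2 * (w - z0)))"
      using C by (simp add: field_simps)
    then have "Gamma x = Gamma (2 * (w - z0) + 1) / (pochhammer x m * (2 * (w - z0)))"
      using t D by (simp add: field_simps)
    then show ?thesis using t by (simp add: h_def x_def power_int_minus field_simps)
  qed
  show ?thesis unfolding FA_def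
    by (intro exI[of _ "1/4"] conjI exI[of _ h] exI[of _ "1 / (2 * fact m)"] hol hz) (use eq in auto)
qed

lemma FA_zero: "FA (\<lambda>w. rGamma ((w - z0) - of_nat p)) z0 1 p"
proof -
  define h where "h w = pochhammer (w - z0 - of_nat p) p * rGamma (w - z0 + 1)" for w
  have hol: "h holomorphic_on ball z0 1"
    unfolding h_def pochhammer_prod by (intro holomorphic_intros holomorphic_on_prod)
  have hz: "h z0 = complex_of_real ((-1)^p * fact p)"
    by (simp add: h_def pochhammer_minus flip: pochhammer_fact)
  have eq: "rGamma ((w - z0) - of_nat p) = (w - z0) powi 1 * h w" for w
    using pochhammer_rGamma[of "(w - z0) - of_nat p" "Suc p"]
    by (simp add: h_def pochhammer_Suc algebra_simps)
  show ?thesis unfolding FA_def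
    by (intro exI[of _ "1"] conjI exI[of _ h] exI[of _ "fact p"] hol hz) (use eq in auto)
qed

lemma FA_posG:
  assumes "m \<ge> 1"
  shows "FA (\<lambda>w. Gamma (2 * (w - z0) + of_nat m)) z0 0 0"
proof (rule FA_holo[of "1/4" _ _ _ "Gamma (real m)"])
  show "(\<lambda>w. Gamma (2 * (w - z0) + of_nat m)) holomorphic_on ball z0 (1/4)"
  proof (intro holomorphic_intros)
    fix w assume w: "w \<in> ball z0 (1/4)"
    have "\<bar>Re (w - z0)\<bar> < 1/4"
      using w abs_Re_le_cmod[of "w - z0"] by (auto simp: dist_norm norm_minus_commute)
    then show "2 * (w - z0) + of_nat m \<notin> \<int>\<^sub>\<le>\<^sub>0" using assms nonpos_Re by force
  qed
  show "Gamma (2 * (z0 - z0) + of_nat m) = complex_of_real ((- 1) ^ 0 * Gamma (real m))"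
    using Gamma_complex_of_real[of "real m"] by simp
  show "Gamma (real m) > 0" using assms by simp
qed simp

lemma FA_posR:
  assumes "m \<ge> 1"
  shows "FA (\<lambda>w. rGamma ((w - z0) + of_nat m)) z0 0 0"
proof (rule FA_holo[of "1" _ _ _ "rGamma (real m)"])
  show "(\<lambda>w. rGamma ((w - z0) + of_nat m)) holomorphic_on ball z0 1"
    by (intro holomorphic_intros)
  show "rGamma (z0 - z0 + of_nat m) = complex_of_real ((- 1) ^ 0 * rGamma (real m))"
    using rGamma_complex_of_real[of "real m"] by simp
  show "rGamma (real m) > 0" using assms by (simp add: rGamma_inverse_Gamma)
qed simp



lemma adm_gap:
  assumes "admissible n l" "1 \<le> a" "a \<le> b" "b \<le> n"
  shows "l b + (b - a) \<le> l a"
proof -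
  have "\<forall>b. a \<le> b \<longrightarrow> b \<le> n \<longrightarrow> b - a = d \<longrightarrow> l b + (b - a) \<le> l a" for d
  proof (induction d)
    case 0 then show ?case by auto
  next
    case (Suc d)
    show ?case
    proof (intro allI impI)
      fix b assume b: "a \<le> b" "b \<le> n" "b - a = Suc d"
      then have "l (b - 1) + d \<le> l a" using Suc.IH[rule_format, of "b - 1"] by auto
      moreover have "1 \<le> b - 1" "b - 1 < b" using b assms(2) by auto
      then have "l b < l (b - 1)" using assms(1) b unfolding admissible_def by blast
      ultimately show "l b + (b - a) \<le> l a" using b by linarith
    qed
  qed
  then show ?thesis using assms by blast
qed

lemma adm_lower:
  assumes "admissible n l" "1 \<le> j" "j \<le> n"
  shows "n - j \<le> l j"
  using adm_gap[OF assms(1,2,3) order_refl] assms by linarith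

lemma coeff_c_alt:
  "coeff_c n l w = complex_of_real ((-1)^(n*(n-1) div 2 + (\<Sum>j=1..n. l j)) *
      real_of_int (\<Prod>(a, b)\<in>{(a, b). 1 \<le> a \<and> a < b \<and> b \<le> n}. int (l a) ^ 2 - int (l b) ^ 2)) *
    ((\<Prod>k=1..n. Gamma (2 * w + 2 * of_nat k - 1)) *
     (\<Prod>j=1..n. rGamma (- of_nat (l j) + w + of_nat n) * rGamma (of_nat (l j) + w + of_nat n)))"
proof -
  have "(\<Prod>j=1..n. Gamma (- of_nat (l j) + w + of_nat n) * Gamma (of_nat (l j) + w + of_nat n))
     = inverse (\<Prod>j=1..n. rGamma (- of_nat (l j) + w + of_nat n) * rGamma (of_nat (l j) + w + of_nat n))"
    by (simp add: Gamma_def prod_inversef[symmetric] o_def inverse_mult_distrib)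
  moreover have "(\<Prod>(a, b)\<in>{(a, b). 1 \<le> a \<and> a < b \<and> b \<le> n}. of_int (int (l a) ^ 2 - int (l b) ^ 2))
     = (of_int (\<Prod>(a, b)\<in>{(a, b). 1 \<le> a \<and> a < b \<and> b \<le> n}. int (l a) ^ 2 - int (l b) ^ 2) :: complex)"
    by (simp add: of_int_prod case_prod_unfold)
  ultimately show ?thesis unfolding coeff_c_def
    by (simp add: divide_inverse power_add mult_ac)
qed



lemma main_FA:
  fixes n \<alpha> q :: nat and l :: "nat \<Rightarrow> nat"
  assumes nq: "n = q + \<alpha>" and a1: "1 \<le> \<alpha>" and adm: "admissible n l"
  defines "z0 \<equiv> - (of_nat q :: complex)"
  defines "Jc \<equiv> {j\<in>{1..n}. l j < \<alpha>}"
  defines "E0 \<equiv> n*(n-1) div 2 + q + q * \<alpha> + (\<Sum>j=q+1..n. n - j)"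
  shows "\<exists>D E. FA (coeff_c n l) z0 D E \<and> D = int \<alpha> - int (card Jc)
     \<and> (Jc = {q+1..n} \<longrightarrow> (\<exists>X. E = E0 + 2 * X))"
proof -
  define V where "V = real_of_int (\<Prod>(a, b)\<in>{(a, b). 1 \<le> a \<and> a < b \<and> b \<le> n}. int (l a) ^ 2 - int (l b) ^ 2)"
  define N where "N = n*(n-1) div 2 + (\<Sum>j=1..n. l j)"
  have finP: "finite {(a, b). 1 \<le> a \<and> a < b \<and> b \<le> n}"
    by (rule finite_subset[of _ "{1..n} \<times> {1..n}"]) auto
  have Vpos: "V > 0" unfolding V_def of_int_0_less_iff
  proof (rule prod_pos, clarify)
    fix a b assume ab: "1 \<le> a" "a < b" "b \<le> n"
    then have "l b < l a" using adm unfolding admissible_def by blast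
    then have "int (l b) ^ 2 < int (l a) ^ 2" by (intro power_strict_mono) auto
    then show "0 < int (l a) ^ 2 - int (l b) ^ 2" by simp
  qed
  have FK: "FA (\<lambda>w. complex_of_real ((-1)^N * V)) z0 0 N"
    by (rule FA_holo[of 1 _ _ _ V]) (auto intro: Vpos)
  define dk where "dk k = (if k \<le> q then -1 else 0 :: int)" for k
  define ek where "ek k = (if k \<le> q then 1 else 0 :: nat)" for k
  have FG: "FA (\<lambda>w. \<Prod>k=1..n. Gamma (2 * w + 2 * of_nat k - 1)) z0 (\<Sum>k=1..n. dk k) (\<Sum>k=1..n. ek k)"
  proof (rule FA_prod)
    fix k assume k: "k \<in> {1..n}"
    show "FA (\<lambda>w. Gamma (2 * w + 2 * of_nat k - 1)) z0 (dk k) (ek k)"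
    proof (cases "k \<le> q")
      case True
      then obtain i where i: "q = k + i" using le_Suc_ex by blast
      have "(\<lambda>w. Gamma (2 * w + 2 * of_nat k - 1)) = (\<lambda>w. Gamma (2 * (w - z0) - of_nat (2 * i + 1)))"
        by (auto simp: z0_def i algebra_simps)
      then show ?thesis using FA_pole[of "2 * i + 1" z0] True by (simp add: dk_def ek_def)
    next
      case False
      then obtain i where i: "k = q + 1 + i" by (intro that[of "k - q - 1"]) auto
      have "(\<lambda>w. Gamma (2 * w + 2 * of_nat k - 1)) = (\<lambda>w. Gamma (2 * (w - z0) + of_nat (2 * i + 1)))"
        by (auto simp: z0_def i algebra_simps)
      then show ?thesis using FA_posG[of "2 * i + 1" z0] False by (simp add: dk_def ek_def)
    qed
  qed simp
  define dj where "dj j = (if \<alpha> \<le> l j then 1 else 0 :: int)" for j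
  define ej where "ej j = (if \<alpha> \<le> l j then l j - \<alpha> else 0 :: nat)" for j
  have FR: "FA (\<lambda>w. \<Prod>j=1..n. rGamma (- of_nat (l j) + w + of_nat n) * rGamma (of_nat (l j) + w + of_nat n))
      z0 (\<Sum>j=1..n. dj j) (\<Sum>j=1..n. ej j)"
  proof (rule FA_prod)
    fix j assume j: "j \<in> {1..n}"
    have R2: "FA (\<lambda>w. rGamma (of_nat (l j) + w + of_nat n)) z0 0 0"
    proof -
      have "(\<lambda>w. rGamma (of_nat (l j) + w + of_nat n)) = (\<lambda>w. rGamma ((w - z0) + of_nat (l j + \<alpha>)))"
        by (auto simp: z0_def nq algebra_simps)
      then show ?thesis using FA_posR[of "l j + \<alpha>" z0] a1 by simp
    qed
    have R1: "FA (\<lambda>w. rGamma (- of_nat (l j) + w + of_nat n)) z0 (dj j) (ej j)"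
    proof (cases "\<alpha> \<le> l j")
      case True
      then obtain i where i: "l j = \<alpha> + i" using le_Suc_ex by blast
      have "(\<lambda>w. rGamma (- of_nat (l j) + w + of_nat n)) = (\<lambda>w. rGamma ((w - z0) - of_nat i))"
        by (auto simp: z0_def nq i algebra_simps)
      then show ?thesis using FA_zero[of z0 i] True i by (simp add: dj_def ej_def)
    next
      case False
      then obtain i where i: "\<alpha> = l j + 1 + i" by (intro that[of "\<alpha> - l j - 1"]) auto
      have "(\<lambda>w. rGamma (- of_nat (l j) + w + of_nat n)) = (\<lambda>w. rGamma ((w - z0) + of_nat (i + 1)))"
        by (auto simp: z0_def nq i algebra_simps)
      then show ?thesis using FA_posR[of "i + 1" z0] False by (simp add: dj_def ej_def)
    qed
    show "FA (\<lambda>w. rGamma (- of_nat (l j) + w + of_nat n) * rGamma (of_nat (l j) + w + of_nat n)) z0 (dj j) (ej j)"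
      using FA_mult[OF R1 R2] by simp
  qed simp
  have FC: "FA (coeff_c n l) z0 (0 + ((\<Sum>k=1..n. dk k) + (\<Sum>j=1..n. dj j))) (N + ((\<Sum>k=1..n. ek k) + (\<Sum>j=1..n. ej j)))"
  proof -
    have "coeff_c n l = (\<lambda>w. complex_of_real ((-1)^N * V) *
      ((\<Prod>k=1..n. Gamma (2 * w + 2 * of_nat k - 1)) *
       (\<Prod>j=1..n. rGamma (- of_nat (l j) + w + of_nat n) * rGamma (of_nat (l j) + w + of_nat n))))"
      by (rule ext) (simp add: coeff_c_alt N_def V_def)
    then show ?thesis using FA_mult[OF FK FA_mult[OF FG FR]] by simp
  qed
  have qn: "q \<le> n" using nq by simp
  have sdk: "(\<Sum>k=1..n. dk k) = - int q"
  proof -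
    have "(\<Sum>k=1..n. dk k) = (\<Sum>k\<in>{1..n} \<inter> {k. k \<le> q}. -1)"
      unfolding dk_def by (simp add: sum.If_cases)
    also have "{1..n} \<inter> {k. k \<le> q} = {1..q}" using qn by auto
    finally show ?thesis by simp
  qed
  have sek: "(\<Sum>k=1..n. ek k) = q"
  proof -
    have "(\<Sum>k=1..n. ek k) = (\<Sum>k\<in>{1..n} \<inter> {k. k \<le> q}. 1)"
      unfolding ek_def by (simp add: sum.If_cases)
    also have "{1..n} \<inter> {k. k \<le> q} = {1..q}" using qn by auto
    finally show ?thesis by simp
  qed
  define J where "J = {j\<in>{1..n}. \<alpha> \<le> l j}"
  have sdj: "(\<Sum>j=1..n. dj j) = int (card J)"
  proof -
    have "(\<Sum>j=1..n. dj j) = (\<Sum>j\<in>{1..n} \<inter> {j. \<alpha> \<le> l j}. 1)"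
      unfolding dj_def by (simp add: sum.If_cases)
    also have "{1..n} \<inter> {j. \<alpha> \<le> l j} = J" by (auto simp: J_def)
    finally show ?thesis by simp
  qed
  have cardJ: "card J + card Jc = n"
  proof -
    have "J \<inter> Jc = {}" "J \<union> Jc = {1..n}" by (auto simp: J_def Jc_def)
    then show ?thesis using card_Un_disjoint[of J Jc] by (auto simp: J_def Jc_def)
  qed
  have D: "0 + ((\<Sum>k=1..n. dk k) + (\<Sum>j=1..n. dj j)) = int \<alpha> - int (card Jc)"
    using sdk sdj cardJ nq by linarith
  have E: "\<exists>X. N + ((\<Sum>k=1..n. ek k) + (\<Sum>j=1..n. ej j)) = E0 + 2 * X" if Jc: "Jc = {q+1..n}"
  proof -
    have iff: "\<alpha> \<le> l j \<longleftrightarrow> j \<le> q" if "j \<in> {1..n}" for j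
    proof
      assume "\<alpha> \<le> l j"
      then have "j \<notin> Jc" unfolding Jc_def by auto
      then show "j \<le> q" using that Jc by auto
    next
      assume "j \<le> q"
      then have "j \<notin> Jc" using Jc by auto
      then show "\<alpha> \<le> l j" using that unfolding Jc_def by auto
    qed
    have lj: "l j = n - j" if "j \<in> {q+1..n}" for j
    proof -
      have "q + 1 \<in> Jc" "j \<in> Jc" using that Jc nq a1 by auto
      then have "l (q+1) < \<alpha>" unfolding Jc_def by auto
      moreover have "l j + (j - (q+1)) \<le> l (q+1)" using adm_gap[OF adm, of "q+1" j] that by auto
      moreover have "n - j \<le> l j" using adm_lower[OF adm, of j] that by auto
      ultimately show ?thesis using that nq by auto
    qed
    have "(\<Sum>j=1..n. l j) + (\<Sum>j=1..n. ej j) = (\<Sum>j=1..n. l j + ej j)" by (simp add: sum.distrib)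
    also have "\<dots> = (\<Sum>j=1..n. if j \<le> q then \<alpha> + 2 * (l j - \<alpha>) else n - j)"
    proof (rule sum.cong[OF refl])
      fix j assume j: "j \<in> {1..n}"
      show "l j + ej j = (if j \<le> q then \<alpha> + 2 * (l j - \<alpha>) else n - j)"
      proof (cases "j \<le> q")
        case True then show ?thesis using iff[OF j] by (simp add: ej_def)
      next
        case False then show ?thesis using iff[OF j] lj[of j] j by (simp add: ej_def)
      qed
    qed
    also have "\<dots> = (\<Sum>j\<in>{1..n} \<inter> {j. j \<le> q}. \<alpha> + 2 * (l j - \<alpha>)) + (\<Sum>j\<in>{1..n} \<inter> - {j. j \<le> q}. n - j)"
      by (simp add: sum.If_cases)
    also have "{1..n} \<inter> {j. j \<le> q} = {1..q}" using qn by auto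
    also have "{1..n} \<inter> - {j. j \<le> q} = {q+1..n}" by auto
    also have "(\<Sum>j\<in>{1..q}. \<alpha> + 2 * (l j - \<alpha>)) = q * \<alpha> + 2 * (\<Sum>j\<in>{1..q}. l j - \<alpha>)"
      by (simp add: sum.distrib sum_distrib_left)
    finally have "(\<Sum>j=1..n. l j) + (\<Sum>j=1..n. ej j) = q * \<alpha> + 2 * (\<Sum>j\<in>{1..q}. l j - \<alpha>) + (\<Sum>j=q+1..n. n - j)" .
    then show ?thesis unfolding N_def E0_def sek
      by (intro exI[of _ "\<Sum>j\<in>{1..q}. l j - \<alpha>"]) linarith
  qed
  show ?thesis using FC D E by blast
qed



lemma Jc_sub:
  assumes "admissible n l" "n = q + \<alpha>"
  shows "{j\<in>{1..n}. l j < \<alpha>} \<subseteq> {q+1..n}"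
proof
  fix j assume j: "j \<in> {j\<in>{1..n}. l j < \<alpha>}"
  then have "n - j \<le> l j" using adm_lower[OF assms(1)] by auto
  then show "j \<in> {q+1..n}" using j assms(2) by auto
qed

lemma cond_iff:
  assumes adm: "admissible n l" and nq: "n = q + \<alpha>" and a1: "1 \<le> \<alpha>"
  shows "{j\<in>{1..n}. l j < \<alpha>} = {q+1..n} \<longleftrightarrow> (\<forall>j\<in>{q+1..n}. l j = n - j)"
proof
  assume Jc: "{j\<in>{1..n}. l j < \<alpha>} = {q+1..n}"
  show "\<forall>j\<in>{q+1..n}. l j = n - j"
  proof
    fix j assume that: "j \<in> {q+1..n}"
    have "q + 1 \<in> {q+1..n}" using nq a1 by auto
    then have "l (q+1) < \<alpha>" using Jc by blast
    moreover have "l j + (j - (q+1)) \<le> l (q+1)" using adm_gap[OF adm, of "q+1" j] that by auto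
    moreover have "n - j \<le> l j" using adm_lower[OF adm, of j] that by auto
    ultimately show "l j = n - j" using that nq by auto
  qed
next
  assume c: "\<forall>j\<in>{q+1..n}. l j = n - j"
  show "{j\<in>{1..n}. l j < \<alpha>} = {q+1..n}"
  proof
    show "{j\<in>{1..n}. l j < \<alpha>} \<subseteq> {q+1..n}" by (rule Jc_sub[OF adm nq])
    show "{q+1..n} \<subseteq> {j\<in>{1..n}. l j < \<alpha>}" using c nq a1 by auto
  qed
qed

theorem mainTheorem10:
  fixes n \<alpha> :: nat
  assumes "1 \<le> n" and "1 \<le> \<alpha>" and "\<alpha> \<le> n"
  defines "z0 \<equiv> complex_of_int (int \<alpha> - int n)"
  shows "(\<forall>l. admissible n l \<longrightarrow> holomorphic_at_removable (coeff_c n l) z0)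
       \<and> (\<forall>l. admissible n l \<longrightarrow>
            (value_at (coeff_c n l) z0 \<noteq> 0 \<longleftrightarrow> (\<forall>j\<in>{n - \<alpha> + 1..n}. l j = n - j)))
       \<and> (\<exists>s::real. (s = 1 \<or> s = -1) \<and>
            (\<forall>l. admissible n l \<longrightarrow> value_at (coeff_c n l) z0 \<noteq> 0 \<longrightarrow>
               (\<exists>x::real. x > 0 \<and> value_at (coeff_c n l) z0 = complex_of_real (s * x))))"
proof -
  define q where "q = n - \<alpha>"
  have nq: "n = q + \<alpha>" using assms(3) by (simp add: q_def)
  have z0: "z0 = - of_nat q" unfolding z0_def using nq by simp
  have nq1: "n - \<alpha> + 1 = q + 1" by (simp add: q_def)
  define E0 where "E0 = n*(n-1) div 2 + q + q * \<alpha> + (\<Sum>j=q+1..n. n - j)"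
  have key: "holomorphic_at_removable (coeff_c n l) z0
     \<and> (value_at (coeff_c n l) z0 \<noteq> 0 \<longleftrightarrow> (\<forall>j\<in>{q+1..n}. l j = n - j))
     \<and> (value_at (coeff_c n l) z0 \<noteq> 0 \<longrightarrow>
         (\<exists>x::real. x > 0 \<and> value_at (coeff_c n l) z0 = complex_of_real ((-1)^E0 * x)))"
    if adm: "admissible n l" for l
  proof -
    define Jc where "Jc = {j\<in>{1..n}. l j < \<alpha>}"
    obtain D E where FA: "FA (coeff_c n l) z0 D E" and D: "D = int \<alpha> - int (card Jc)"
      and E: "Jc = {q+1..n} \<Longrightarrow> \<exists>X. E = E0 + 2 * X"
      using main_FA[OF nq assms(2) adm] unfolding z0 Jc_def E0_def by blast
    have sub: "Jc \<subseteq> {q+1..n}" unfolding Jc_def by (rule Jc_sub[OF adm nq])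
    have cq: "card {q+1..n} = \<alpha>" using nq by simp
    have le: "card Jc \<le> \<alpha>" using card_mono[OF _ sub] cq by simp
    have D0: "D = 0 \<longleftrightarrow> Jc = {q+1..n}"
    proof
      assume "D = 0" then have "card Jc = card {q+1..n}" using D cq by simp
      then show "Jc = {q+1..n}" using card_subset_eq[OF _ sub] by simp
    qed (use D cq in simp)
    have Dge: "D \<ge> 0" using D le by simp
    note fin = FA_final[OF FA Dge]
    have cond: "Jc = {q+1..n} \<longleftrightarrow> (\<forall>j\<in>{q+1..n}. l j = n - j)"
      unfolding Jc_def by (rule cond_iff[OF adm nq assms(2)])
    have v0: "value_at (coeff_c n l) z0 \<noteq> 0 \<longleftrightarrow> D = 0"
    proof
      assume "value_at (coeff_c n l) z0 \<noteq> 0" then show "D = 0"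
        using fin D le unfolding value_at_def by fastforce
    next
      assume "D = 0" then show "value_at (coeff_c n l) z0 \<noteq> 0"
        using fin unfolding value_at_def by auto
    qed
    show ?thesis
    proof (intro conjI impI)
      show "holomorphic_at_removable (coeff_c n l) z0"
        using fin unfolding holomorphic_at_removable_def by blast
      show "value_at (coeff_c n l) z0 \<noteq> 0 \<longleftrightarrow> (\<forall>j\<in>{q+1..n}. l j = n - j)"
        using v0 D0 cond by simp
      assume nz: "value_at (coeff_c n l) z0 \<noteq> 0"
      then have "D = 0" using v0 by simp
      then obtain X where X: "E = E0 + 2 * X" using E D0 by blast
      obtain p where p: "p > 0" "value_at (coeff_c n l) z0 = complex_of_real ((-1)^E * p)"
        using fin \<open>D = 0\<close> unfolding value_at_def by auto
      have "((-1::real)^E) = (-1)^E0" unfolding X by (simp add: power_add power_mult)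
      then show "\<exists>x::real. x > 0 \<and> value_at (coeff_c n l) z0 = complex_of_real ((-1)^E0 * x)"
        using p by auto
    qed
  qed
  have s: "((-1::real)^E0 = 1 \<or> (-1::real)^E0 = -1)"
    by (cases "even E0") auto
  show ?thesis unfolding nq1
    using key s by blast
qed

end
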